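(* Let $m\ge 2$ and let $B$ be a blocker in $CK(2m)$ such that $e=[2m-3,2m-2]\in B$ and $f=[2m-2,2m-1]\notin B$. Let $G'$ be the complete convex geometric graph on the $2m-2$ vertices $0,1,\dots,2m-3$ (the subgraph of $CK(2m)$ induced by deleting the endpoints $2m-2,2m-1$ of $f$). Then $B\setminus\{e\}$ is a set of edges of $G'$ and is a blocker in $G'$ (a blocking set of $G'$ of size $m-1$).
   Context: $CK(2m)$ denotes the complete convex geometric graph whose vertices are the $2m$ vertices of a convex polygon, labelled cyclically $0,1,\dots,2m-1$, and whose edges are all straight segments between pairs of vertices. Two edges with four distinct endpoints cross iff their endpoints alternate in the cyclic order. More generally, for a set of $2n$ points in convex position, consider the complete convex geometric graph on them; an SPM is a set of $n$ pairwise disjoint edges (no common endpoint and no crossing), a blocking set is a set of edges containing at least one edge of every SPM, and a blocker is a blocking set of exactly $n$ edges. *)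

theory Defs
  imports Main
begin

text \<open>Points in convex position are identified with natural-number labels; their
cyclic order is the order of the labels. Edges are two-element sets of labels.\<close>

definition cedges :: "nat set \<Rightarrow> nat set set" where
  "cedges V = {e. e \<subseteq> V \<and> card e = 2}"

text \<open>Two edges with four distinct endpoints cross iff their endpoints alternate
(in the cyclic order; for labels this is the same as alternation in the linear order).\<close>
definition crosses :: "nat set \<Rightarrow> nat set \<Rightarrow> bool" where
  "crosses e f \<longleftrightarrow>
     (\<exists>a b c d. a < c \<and> c < b \<and> b < d \<and>
        ((e = {a, b} \<and> f = {c, d}) \<or> (e = {c, d} \<and> f = {a, b})))"

definition disjoint_edges :: "nat set \<Rightarrow> nat set \<Rightarrow> bool" where
  "disjoint_edges e f \<longleftrightarrow> e \<inter> f = {} \<and> \<not> crosses e f"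

definition SPM :: "nat set \<Rightarrow> nat set set \<Rightarrow> bool" where
  "SPM V M \<longleftrightarrow> M \<subseteq> cedges V \<and> finite M \<and> card M = card V div 2 \<and>
     pairwise disjoint_edges M"

definition blocking_set :: "nat set \<Rightarrow> nat set set \<Rightarrow> bool" where
  "blocking_set V B \<longleftrightarrow> B \<subseteq> cedges V \<and> (\<forall>M. SPM V M \<longrightarrow> B \<inter> M \<noteq> {})"

definition blocker :: "nat set \<Rightarrow> nat set set \<Rightarrow> bool" where
  "blocker V B \<longleftrightarrow> blocking_set V B \<and> finite B \<and> card B = card V div 2"

end

theory Submission
  imports Defs
begin

definition Mc :: "nat \<Rightarrow> nat \<Rightarrow> nat set set" where
  "Mc k c = {{a,b} | a b. a<b \<and> b<2*k \<and> (a+b = c \<or> a+b = c+2*k)}"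

lemma dbl_eq: "{p,r} = {a,b} \<Longrightarrow> (p::nat) < r \<Longrightarrow> a < b \<Longrightarrow> p = a \<and> r = b"
  by (auto simp: doubleton_eq_iff)

lemma Mc_share:
  assumes "{a,b} \<in> Mc k c" "a < b" "{a',b'} \<in> Mc k c" "a' < b'" "c < 2*k"
    and "{a,b} \<inter> {a',b'} \<noteq> {}"
  shows "{a,b} = {a',b'}"
proof -
  from assms(1) obtain u v where "{a,b} = {u,v}" "u<v" "v<2*k" "u+v = c \<or> u+v = c+2*k"
    unfolding Mc_def by blast
  with dbl_eq[of a b u v] assms(2) have 1: "b<2*k" "a+b = c \<or> a+b = c+2*k" by auto
  from assms(3) obtain u v where "{a',b'} = {u,v}" "u<v" "v<2*k" "u+v = c \<or> u+v = c+2*k"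
    unfolding Mc_def by blast
  with dbl_eq[of a' b' u v] assms(4) have 2: "b'<2*k" "a'+b' = c \<or> a'+b' = c+2*k" by auto
  from assms(6) have "a = a' \<or> a = b' \<or> b = a' \<or> b = b'" by auto
  then have "a = a' \<and> b = b'" using 1 2 assms(2,4,5) by linarith
  then show ?thesis by simp
qed

lemma Mc_nocross:
  assumes "x \<in> Mc k c" "y \<in> Mc k c" "c < 2*k"
  shows "\<not> crosses x y"
proof
  assume "crosses x y"
  then obtain p q r s where o: "p<q" "q<r" "r<s" and
    xy: "(x = {p,r} \<and> y = {q,s}) \<or> (x = {q,s} \<and> y = {p,r})"
    unfolding crosses_def by blast
  have "{p,r} \<in> Mc k c" "{q,s} \<in> Mc k c" using xy assms by auto
  then obtain u v u' v' where
    "{p,r} = {u,v}" "u<v" "v<2*k" "u+v = c \<or> u+v = c+2*k"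
    "{q,s} = {u',v'}" "u'<v'" "v'<2*k" "u'+v' = c \<or> u'+v' = c+2*k"
    unfolding Mc_def by blast
  with dbl_eq[of p r u v] dbl_eq[of q s u' v'] o
  have "s<2*k" "p+r = c \<or> p+r = c+2*k" "q+s = c \<or> q+s = c+2*k" by auto
  with o assms(3) show False by linarith
qed

lemma Mc_sub: "Mc k c \<subseteq> cedges {0..<2*k}"
  unfolding Mc_def cedges_def by auto

lemma Mc_union:
  assumes "odd c" "c < 2*k"
  shows "\<Union>(Mc k c) = {0..<2*k}"
proof
  show "\<Union>(Mc k c) \<subseteq> {0..<2*k}" using Mc_sub[of k c] unfolding cedges_def by blast
next
  show "{0..<2*k} \<subseteq> \<Union>(Mc k c)"
  proof
    fix v assume v: "v \<in> {0..<2*k}"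
    define w where "w = (if v \<le> c then c - v else c + 2*k - v)"
    have w: "w < 2*k" "v + w = c \<or> v + w = c + 2*k" "w \<noteq> v"
      using v assms unfolding w_def by (auto, presburger+)
    have "{min v w, max v w} \<in> Mc k c"
      unfolding Mc_def using w v
      by (intro CollectI exI[of _ "min v w"] exI[of _ "max v w"]) (auto simp: min_def max_def)
    moreover have "v \<in> {min v w, max v w}" by (auto simp: min_def max_def)
    ultimately show "v \<in> \<Union>(Mc k c)" by blast
  qed
qed

lemma finite_cedges: "finite V \<Longrightarrow> finite (cedges V)"
  unfolding cedges_def by (rule finite_subset[of _ "Pow V"]) auto

lemma Mc_SPM:
  assumes "odd c" "c < 2*k"
  shows "SPM {0..<2*k} (Mc k c)"
proof -
  have fin: "finite (Mc k c)" using Mc_sub finite_cedges[of "{0..<2*k}"] finite_subset by blast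
  have pw: "pairwise disjoint_edges (Mc k c)"
    unfolding pairwise_def disjoint_edges_def
  proof (intro ballI impI conjI)
    fix x y assume xy: "x \<in> Mc k c" "y \<in> Mc k c" "x \<noteq> y"
    show "\<not> crosses x y" using Mc_nocross xy assms by blast
    from xy obtain a b a' b' where "x = {a,b}" "a<b" "y = {a',b'}" "a'<b'"
      unfolding Mc_def by blast
    then show "x \<inter> y = {}" using Mc_share[of a b k c a' b'] xy assms by blast
  qed
  have "card (\<Union>(Mc k c)) = sum card (Mc k c)"
  proof (rule card_Union_disjoint)
    show "pairwise disjnt (Mc k c)" using pw
      unfolding pairwise_def disjoint_edges_def disjnt_def by blast
    show "\<And>A. A \<in> Mc k c \<Longrightarrow> finite A" unfolding Mc_def by auto
  qed
  also have "sum card (Mc k c) = sum (\<lambda>_. 2) (Mc k c)"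
    by (rule sum.cong) (use Mc_sub[of k c] in \<open>auto simp: cedges_def\<close>)
  finally have "2*k = 2 * card (Mc k c)" using Mc_union[OF assms] by simp
  then have "card (Mc k c) = card {0..<2*k} div 2" by simp
  then show ?thesis unfolding SPM_def using Mc_sub fin pw by blast
qed

lemma Mc_inj:
  assumes "x \<in> Mc k c" "x \<in> Mc k c'" "c < 2*k" "c' < 2*k"
  shows "c = c'"
proof -
  from assms(1) obtain u v where 1: "x = {u,v}" "u<v" "u+v = c \<or> u+v = c+2*k"
    unfolding Mc_def by blast
  from assms(2) obtain u' v' where 2: "x = {u',v'}" "u'<v'" "u'+v' = c' \<or> u'+v' = c'+2*k"
    unfolding Mc_def by blast
  from 1 2 dbl_eq[of u v u' v'] have "u = u'" "v = v'" by auto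
  with 1 2 assms(3,4) show ?thesis by linarith
qed

lemma blocking_lower:
  assumes "blocking_set {0..<2*k} B"
  shows "k \<le> card B"
proof -
  have finB: "finite B" using assms finite_cedges[of "{0..<2*k}"] finite_subset
    unfolding blocking_set_def by blast
  define g where "g i = (SOME x. x \<in> B \<inter> Mc k (2*i+1))" for i
  have g: "g i \<in> B \<inter> Mc k (2*i+1)" if "i < k" for i
  proof -
    have "SPM {0..<2*k} (Mc k (2*i+1))" using that by (intro Mc_SPM) auto
    then have "B \<inter> Mc k (2*i+1) \<noteq> {}" using assms unfolding blocking_set_def by blast
    then show ?thesis unfolding g_def by (meson ex_in_conv someI_ex)
  qed
  have "inj_on g {..<k}"
  proof
    fix i j assume "i \<in> {..<k}" "j \<in> {..<k}" "g i = g j"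
    then have "2*i+1 = 2*j+1" using g[of i] g[of j] Mc_inj[of "g i" k "2*i+1" "2*j+1"] by auto
    then show "i = j" by simp
  qed
  moreover have "g ` {..<k} \<subseteq> B" using g by blast
  ultimately have "card {..<k} \<le> card B" using card_inj_on_le finB by blast
  then show ?thesis by simp
qed

theorem claim3p4:
  fixes m :: nat and B :: "nat set set"
  assumes "m \<ge> 2"
    and "blocker {0..<2*m} B"
    and "{2*m-3, 2*m-2} \<in> B"
    and "{2*m-2, 2*m-1} \<notin> B"
  shows "B - {{2*m-3, 2*m-2}} \<subseteq> cedges {0..<2*m-2}
         \<and> blocker {0..<2*m-2} (B - {{2*m-3, 2*m-2}})"
proof -
  define V where "V = {0..<2*m}"
  define V' where "V' = {0..<2*m-2}"
  define e where "e = {2*m-3, 2*m-2}"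
  define f where "f = {2*m-2, 2*m-1}"
  define B' where "B' = B \<inter> cedges V'"
  have bl: "blocking_set V B" "finite B" "card B = m"
    using assms(2) unfolding blocker_def V_def by auto
  have cV: "card V div 2 = m" "card V' div 2 = m - 1" unfolding V_def V'_def by auto
  have fin: "f \<in> cedges V" unfolding f_def cedges_def V_def using assms(1) by auto
  have fV': "f \<inter> V' = {}" unfolding f_def V'_def by auto
  have VV': "cedges V' \<subseteq> cedges V" unfolding cedges_def V_def V'_def by auto
  have "blocking_set V' B'"
    unfolding blocking_set_def
  proof (intro conjI allI impI)
    show "B' \<subseteq> cedges V'" unfolding B'_def by blast
    fix M assume M: "SPM V' M"
    have Msub: "M \<subseteq> cedges V'" "finite M" "card M = m - 1" "pairwise disjoint_edges M"
      using M cV unfolding SPM_def by auto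
    have fM: "f \<notin> M" using Msub(1) fV' unfolding cedges_def f_def by auto
    have nc: "\<not> crosses f x \<and> \<not> crosses x f \<and> f \<inter> x = {} \<and> x \<inter> f = {}" if "x \<in> M" for x
    proof -
      have xV: "x \<subseteq> V'" using that Msub(1) unfolding cedges_def by auto
      have "\<not> crosses f x"
      proof
        assume "crosses f x"
        then obtain a b c d where o: "a<c" "c<b" "b<d" and
          h: "(f = {a,b} \<and> x = {c,d}) \<or> (f = {c,d} \<and> x = {a,b})" unfolding crosses_def by blast
        show False
        proof (cases "f = {a,b}")
          case True
          then have "a = 2*m-2" "b = 2*m-1" using dbl_eq[of a b "2*m-2" "2*m-1"] o assms(1)
            unfolding f_def by auto
          moreover have "c \<in> V'" using h True xV o by auto
          ultimately show False using o unfolding V'_def by auto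
        next
          case False
          then have "f = {c,d}" "x = {a,b}" using h by auto
          then have "c = 2*m-2" "b \<in> V'" using dbl_eq[of c d "2*m-2" "2*m-1"] o assms(1) xV
            unfolding f_def by auto
          then show False using o unfolding V'_def by auto
        qed
      qed
      moreover have "\<not> crosses x f"
      proof
        assume "crosses x f"
        then have "crosses f x" unfolding crosses_def by blast
        then show False using calculation by blast
      qed
      ultimately show ?thesis using xV fV' by blast
    qed
    have "SPM V (insert f M)"
      unfolding SPM_def
    proof (intro conjI)
      show "insert f M \<subseteq> cedges V" using fin Msub(1) VV' by blast
      show "finite (insert f M)" using Msub by simp
      show "card (insert f M) = card V div 2" using Msub fM cV assms(1) by simp
      show "pairwise disjoint_edges (insert f M)"
        unfolding pairwise_insert using Msub(4) nc unfolding disjoint_edges_def by blast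
    qed
    then have "B \<inter> insert f M \<noteq> {}" using bl(1) unfolding blocking_set_def by blast
    then have "B \<inter> M \<noteq> {}" using assms(4) unfolding f_def by blast
    then show "B' \<inter> M \<noteq> {}" unfolding B'_def using Msub(1) by blast
  qed
  moreover have "V' = {0..<2*(m-1)}" unfolding V'_def by (simp add: right_diff_distrib')
  ultimately have lo: "m - 1 \<le> card B'" using blocking_lower by metis
  have eV': "e \<notin> cedges V'" unfolding e_def V'_def cedges_def by auto
  have sub: "B' \<subseteq> B - {e}" unfolding B'_def using eV' by blast
  have cBe: "card (B - {e}) = m - 1" using bl assms(3) unfolding e_def by simp
  have "B' = B - {e}"
    using card_seteq[of "B - {e}" B'] sub lo cBe bl(2) by auto
  then have "B - {e} \<subseteq> cedges V'" unfolding B'_def by blast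
  moreover have "blocking_set V' (B - {e})" using \<open>blocking_set V' B'\<close> \<open>B' = B - {e}\<close> by simp
  ultimately show ?thesis unfolding blocker_def e_def[symmetric] V'_def[symmetric]
    using cBe cV bl(2) by auto
qed

end
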